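(* Let $\Gamma$ be a Deza graph with parameters $(n,k,k-1,a)$, $k>1$, $\beta=1$. Let $x,y$ be $NA$-vertices with $C(x)\ne C(y)$. Then: (1) if some vertex of $\{x,x_b\}$ is adjacent to some vertex of $\{y,y_b\}$, or some vertex of $\{x',x_b'\}$ is adjacent to some vertex of $\{y',y_b'\}$, then all possible edges between $\{x,x_b\}$ and $\{y,y_b\}$ are present and all possible edges between $\{x',x_b'\}$ and $\{y',y_b'\}$ are present; (2) if some vertex of $\{x,x_b\}$ is adjacent to some vertex of $\{y',y_b'\}$, or some vertex of $\{x',x_b'\}$ is adjacent to some vertex of $\{y,y_b\}$, then all possible edges between $\{x,x_b\}$ and $\{y',y_b'\}$ are present and all possible edges between $\{x',x_b'\}$ and $\{y,y_b\}$ are present; (3) the number of edges between $C(x)$ and $C(y)$ is $0$, $8$ or $16$.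
   Context: A Deza graph with parameters $(n,k,b,a)$, $a\le b$, is a $k$-regular graph on $n$ vertices in which any two distinct vertices have $a$ or $b$ common neighbours; $\beta$ is the number of vertices $u\ne v$ with exactly $b$ common neighbours with a given vertex $v$. Since $\beta=1$, for each vertex $x$ let $x_b$ denote the unique vertex having $b=k-1$ common neighbours with $x$. A vertex $x$ is an $A$-vertex if $x$ is adjacent to $x_b$, and an $NA$-vertex otherwise. For an $NA$-vertex $x$, $x'$ denotes the unique neighbour of $x$ not adjacent to $x_b$, $x_b'=(x')_b=(x_b)'$, and $C(x)=\{x,x',x_b,x_b'\}$. *)

theory Defs
  imports Main
begin

definition simple_graph :: "'a set \<Rightarrow> ('a \<Rightarrow> 'a \<Rightarrow> bool) \<Rightarrow> bool" where
  "simple_graph V E \<longleftrightarrow> finite V \<and> (\<forall>x y. E x y \<longrightarrow> x \<in> V \<and> y \<in> V)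
     \<and> (\<forall>x y. E x y \<longrightarrow> E y x) \<and> (\<forall>x. \<not> E x x)"

definition nbhd :: "'a set \<Rightarrow> ('a \<Rightarrow> 'a \<Rightarrow> bool) \<Rightarrow> 'a \<Rightarrow> 'a set" where
  "nbhd V E x = {y \<in> V. E x y}"

definition common_nbrs :: "'a set \<Rightarrow> ('a \<Rightarrow> 'a \<Rightarrow> bool) \<Rightarrow> 'a \<Rightarrow> 'a \<Rightarrow> nat" where
  "common_nbrs V E x y = card (nbhd V E x \<inter> nbhd V E y)"

definition deza_graph :: "'a set \<Rightarrow> ('a \<Rightarrow> 'a \<Rightarrow> bool) \<Rightarrow> nat \<Rightarrow> nat \<Rightarrow> nat \<Rightarrow> nat \<Rightarrow> bool" where
  "deza_graph V E n k b a \<longleftrightarrow> simple_graph V E \<and> card V = n \<and> a \<le> b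
     \<and> (\<forall>v\<in>V. card (nbhd V E v) = k)
     \<and> (\<forall>u\<in>V. \<forall>v\<in>V. u \<noteq> v \<longrightarrow> common_nbrs V E u v = a \<or> common_nbrs V E u v = b)"

definition deza_beta :: "'a set \<Rightarrow> ('a \<Rightarrow> 'a \<Rightarrow> bool) \<Rightarrow> nat \<Rightarrow> 'a \<Rightarrow> nat" where
  "deza_beta V E b v = card {u \<in> V. u \<noteq> v \<and> common_nbrs V E v u = b}"

text \<open>x_b: the unique vertex having b common neighbours with x (when beta = 1).\<close>
definition vb :: "'a set \<Rightarrow> ('a \<Rightarrow> 'a \<Rightarrow> bool) \<Rightarrow> nat \<Rightarrow> 'a \<Rightarrow> 'a" where
  "vb V E b x = (THE u. u \<in> V \<and> u \<noteq> x \<and> common_nbrs V E x u = b)"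

definition A_vertex :: "'a set \<Rightarrow> ('a \<Rightarrow> 'a \<Rightarrow> bool) \<Rightarrow> nat \<Rightarrow> 'a \<Rightarrow> bool" where
  "A_vertex V E b x \<longleftrightarrow> E x (vb V E b x)"

definition NA_vertex :: "'a set \<Rightarrow> ('a \<Rightarrow> 'a \<Rightarrow> bool) \<Rightarrow> nat \<Rightarrow> 'a \<Rightarrow> bool" where
  "NA_vertex V E b x \<longleftrightarrow> x \<in> V \<and> \<not> E x (vb V E b x)"

definition vprime :: "'a set \<Rightarrow> ('a \<Rightarrow> 'a \<Rightarrow> bool) \<Rightarrow> nat \<Rightarrow> 'a \<Rightarrow> 'a" where
  "vprime V E b x = (THE z. z \<in> V \<and> E x z \<and> \<not> E z (vb V E b x))"

definition Cset :: "'a set \<Rightarrow> ('a \<Rightarrow> 'a \<Rightarrow> bool) \<Rightarrow> nat \<Rightarrow> 'a \<Rightarrow> 'a set" where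
  "Cset V E b x = {x, vprime V E b x, vb V E b x, vb V E b (vprime V E b x)}"

definition all_edges :: "('a \<Rightarrow> 'a \<Rightarrow> bool) \<Rightarrow> 'a set \<Rightarrow> 'a set \<Rightarrow> bool" where
  "all_edges E S T \<longleftrightarrow> (\<forall>u\<in>S. \<forall>w\<in>T. E u w)"

definition some_edge :: "('a \<Rightarrow> 'a \<Rightarrow> bool) \<Rightarrow> 'a set \<Rightarrow> 'a set \<Rightarrow> bool" where
  "some_edge E S T \<longleftrightarrow> (\<exists>u\<in>S. \<exists>w\<in>T. E u w)"

definition num_edges_between :: "('a \<Rightarrow> 'a \<Rightarrow> bool) \<Rightarrow> 'a set \<Rightarrow> 'a set \<Rightarrow> nat" where
  "num_edges_between E S T = card {{u, w} | u w. u \<in> S \<and> w \<in> T \<and> E u w}"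

end

theory Submission imports Defs begin

lemma even_inv:
  assumes "finite M" "\<forall>w\<in>M. f w \<in> M \<and> f w \<noteq> w \<and> f (f w) = w"
  shows "even (card M)"
  using assms
proof (induction "card M" arbitrary: M rule: less_induct)
  case less
  show ?case
  proof (cases "M = {}")
    case True then show ?thesis by simp
  next
    case False
    then obtain w where w: "w \<in> M" by auto
    let ?M = "M - {w, f w}"
    have fw: "f w \<in> M" "f w \<noteq> w" using less.prems w by auto
    have sub: "{w, f w} \<subseteq> M" using w fw by auto
    have c1: "card ?M = card M - card {w, f w}"
      by (rule card_Diff_subset) (use sub in auto)
    have c2: "card {w, f w} \<le> card M" by (rule card_mono[OF less.prems(1) sub])
    have c: "card M = card ?M + 2" using c1 c2 fw by simp
    have "even (card ?M)"
    proof (rule less.hyps)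
      show "card ?M < card M" using c by simp
      show "finite ?M" using less.prems by simp
      show "\<forall>v\<in>?M. f v \<in> ?M \<and> f v \<noteq> v \<and> f (f v) = v"
      proof
        fix v assume v: "v \<in> ?M"
        have h: "f v \<in> M" "f v \<noteq> v" "f (f v) = v" using less.prems v by auto
        have "f v \<noteq> w" using v h by auto
        moreover have "f v \<noteq> f w" using v h less.prems w by (metis DiffD2 insertI1)
        ultimately show "f v \<in> ?M \<and> f v \<noteq> v \<and> f (f v) = v" using h by auto
      qed
    qed
    then show ?thesis using c by simp
  qed
qed

lemma num_edges_card: assumes "A \<inter> B = {}"
  shows "num_edges_between E A B = card {(u, w). u \<in> A \<and> w \<in> B \<and> E u w}"
proof -
  let ?R = "{(u, w). u \<in> A \<and> w \<in> B \<and> E u w}"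
  have img: "{{u, w} | u w. u \<in> A \<and> w \<in> B \<and> E u w} = (\<lambda>(u, w). {u, w}) ` ?R"
    unfolding image_def by auto
  have inj: "inj_on (\<lambda>(u, w). {u, w}) ?R"
  proof (rule inj_onI)
    fix s t assume "s \<in> ?R" "t \<in> ?R" "(\<lambda>(u, w). {u, w}) s = (\<lambda>(u, w). {u, w}) t"
    then show "s = t" using assms by (auto simp: doubleton_eq_iff)
  qed
  show ?thesis unfolding num_edges_between_def img using card_image[OF inj] .
qed

lemma card8: assumes "card A = 2" "card B = 2" "card C = 2" "card D = 2" "A \<inter> C = {}"
  shows "card (A \<times> B \<union> C \<times> D) = 8"
proof -
  have f: "finite A" "finite B" "finite C" "finite D" using assms by (auto intro: card_ge_0_finite)
  have "(A \<times> B) \<inter> (C \<times> D) = {}" using assms(5) by auto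
  then have "card (A \<times> B \<union> C \<times> D) = card (A \<times> B) + card (C \<times> D)"
    using f by (intro card_Un_disjoint) auto
  then show ?thesis using assms by (simp add: card_cartesian_product)
qed

lemma card16: assumes "card A = 2" "card B = 2" "card C = 2" "card D = 2" "A \<inter> C = {}" "B \<inter> D = {}"
  shows "card (A \<times> B \<union> C \<times> D \<union> (A \<times> D \<union> C \<times> B)) = 16"
proof -
  have f: "finite A" "finite B" "finite C" "finite D" using assms by (auto intro: card_ge_0_finite)
  have e: "A \<times> B \<union> C \<times> D \<union> (A \<times> D \<union> C \<times> B) = (A \<union> C) \<times> (B \<union> D)" by auto
  have "card (A \<union> C) = 4" "card (B \<union> D) = 4" using assms f card_Un_disjoint by (metis add_2_eq_Suc numeral_Bit0 numeral_2_eq_2)+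
  then show ?thesis unfolding e by (simp add: card_cartesian_product)
qed

locale dz =
  fixes V :: "'a set" and E :: "'a \<Rightarrow> 'a \<Rightarrow> bool" and n k a :: nat
  assumes deza: "deza_graph V E n k (k - 1) a"
    and kgt: "k > 1"
    and beta: "\<forall>v\<in>V. deza_beta V E (k - 1) v = 1"
begin

abbreviation "N \<equiv> nbhd V E"
abbreviation "cn \<equiv> common_nbrs V E"
abbreviation "pb \<equiv> vb V E (k - 1)"
abbreviation "pr \<equiv> vprime V E (k - 1)"
abbreviation "NA \<equiv> NA_vertex V E (k - 1)"

lemma finV: "finite V" using deza unfolding deza_graph_def simple_graph_def by auto
lemma EV: "E x y \<Longrightarrow> x \<in> V \<and> y \<in> V" using deza unfolding deza_graph_def simple_graph_def by auto
lemma Esym: "E x y \<longleftrightarrow> E y x" using deza unfolding deza_graph_def simple_graph_def by auto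
lemma Eirr: "\<not> E x x" using deza unfolding deza_graph_def simple_graph_def by auto
lemma N_eq: "N x = {y. E x y}" unfolding nbhd_def using EV by auto
lemma finN: "finite (N x)" unfolding nbhd_def using finV by auto
lemma cardN: "x \<in> V \<Longrightarrow> card (N x) = k" using deza unfolding deza_graph_def by auto
lemma cn_sym: "cn x y = cn y x" unfolding common_nbrs_def by (simp add: Int_commute)
lemma cn_vals: "u \<in> V \<Longrightarrow> v \<in> V \<Longrightarrow> u \<noteq> v \<Longrightarrow> cn u v = a \<or> cn u v = k - 1"
  using deza unfolding deza_graph_def by auto

lemma pb_ex: assumes "v \<in> V" shows "\<exists>!u. u \<in> V \<and> u \<noteq> v \<and> cn v u = k - 1"
proof -
  have "card {u \<in> V. u \<noteq> v \<and> cn v u = k - 1} = 1" using beta assms unfolding deza_beta_def by auto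
  then obtain z where z: "{u \<in> V. u \<noteq> v \<and> cn v u = k - 1} = {z}" by (rule card_1_singletonE)
  show ?thesis
  proof
    show "z \<in> V \<and> z \<noteq> v \<and> cn v z = k - 1" using z by blast
    fix u assume "u \<in> V \<and> u \<noteq> v \<and> cn v u = k - 1"
    then show "u = z" using z by blast
  qed
qed

lemma pb_props: assumes "v \<in> V" shows "pb v \<in> V" "pb v \<noteq> v" "cn v (pb v) = k - 1"
  using theI'[OF pb_ex[OF assms]] unfolding vb_def by auto

lemma pb_unique: assumes "v \<in> V" "u \<in> V" "u \<noteq> v" "cn v u = k - 1" shows "u = pb v"
  using the1_equality[OF pb_ex[OF assms(1)]] assms unfolding vb_def by auto

lemma pb_pb: assumes "v \<in> V" shows "pb (pb v) = v"
  using pb_props[OF assms] by (metis assms cn_sym pb_unique)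

lemma cnK: assumes "u \<in> V" "v \<in> V" "u \<noteq> v" "u \<noteq> pb v" shows "cn v u = a"
  using cn_vals[of v u] assms pb_unique[of v u] by auto

lemma pb_inj: "u \<in> V \<Longrightarrow> v \<in> V \<Longrightarrow> pb u = pb v \<Longrightarrow> u = v"
  by (metis pb_pb)

lemma NA_pb: assumes "NA x" shows "NA (pb x)"
  using assms pb_props pb_pb Esym unfolding NA_vertex_def by metis

lemma pr_ex: assumes "NA x" shows "\<exists>!z. z \<in> V \<and> E x z \<and> \<not> E z (pb x)"
proof -
  have xV: "x \<in> V" and ne: "\<not> E x (pb x)" using assms unfolding NA_vertex_def by auto
  have c1: "card (N x \<inter> N (pb x)) = k - 1" using pb_props[OF xV] unfolding common_nbrs_def by simp
  have "card (N x - N (pb x)) = card (N x) - card (N x \<inter> N (pb x))"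
    by (metis card_Diff_subset_Int finN finite_Int)
  also have "\<dots> = 1" using c1 cardN[OF xV] kgt by simp
  finally obtain z where z: "N x - N (pb x) = {z}" by (rule card_1_singletonE)
  show ?thesis
  proof
    have "z \<in> N x - N (pb x)" using z by auto
    then show "z \<in> V \<and> E x z \<and> \<not> E z (pb x)" unfolding nbhd_def by (auto simp: Esym)
    fix u assume "u \<in> V \<and> E x u \<and> \<not> E u (pb x)"
    then have "u \<in> N x - N (pb x)" unfolding N_eq by (auto simp: Esym)
    then show "u = z" using z by blast
  qed
qed

lemma pr_props: assumes "NA x" shows "pr x \<in> V" "E x (pr x)" "\<not> E (pr x) (pb x)"
  using theI'[OF pr_ex[OF assms]] unfolding vprime_def by auto

lemma pr_unique: assumes "NA x" "z \<in> V" "E x z" "\<not> E z (pb x)" shows "pr x = z"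
  using the1_equality[OF pr_ex[OF assms(1)]] assms unfolding vprime_def by auto

lemma NA_V: "NA x \<Longrightarrow> x \<in> V" unfolding NA_vertex_def by auto
lemma NA_ne: "NA x \<Longrightarrow> \<not> E x (pb x)" unfolding NA_vertex_def by auto

lemma R1: assumes "NA x" "u \<noteq> pr x" "u \<noteq> pr (pb x)" shows "E u x \<longleftrightarrow> E u (pb x)"
proof -
  have xV: "x \<in> V" using assms NA_V by auto
  have A: "E u y" if na: "NA y" and "E u (pb y)" and "u \<noteq> pr (pb y)" for y
  proof (rule ccontr)
    assume "\<not> E u y"
    have yV: "y \<in> V" using na NA_V by auto
    have "pr (pb y) = u"
      using pr_unique[OF NA_pb[OF na], of u] that \<open>\<not> E u y\<close> pb_pb[OF yV] EV Esym by metis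
    then show False using that by simp
  qed
  show ?thesis
  proof
    assume "E u x"
    then show "E u (pb x)" using A[of "pb x"] NA_pb[OF assms(1)] pb_pb[OF xV] assms by metis
  next
    assume "E u (pb x)"
    then show "E u x" using A[of x] assms by metis
  qed
qed

lemma pr_pb_notE: assumes "NA x" shows "\<not> E (pr (pb x)) x" "\<not> E x (pr (pb x))" "E (pb x) (pr (pb x))"
  using pr_props[OF NA_pb[OF assms]] pb_pb[OF NA_V[OF assms]] Esym by auto

lemma card_ins_Int: assumes "finite D" "p \<notin> D"
  shows "card (insert p D \<inter> Nu) = (if p \<in> Nu then Suc (card (D \<inter> Nu)) else card (D \<inter> Nu))"
  using assms by auto

lemma R2: assumes "NA x" "u \<noteq> x" "u \<noteq> pb x" shows "E u (pr x) \<longleftrightarrow> E u (pr (pb x))"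
proof (cases "u \<in> V")
  case False then show ?thesis using EV by blast
next
  case uV: True
  have xV: "x \<in> V" using assms NA_V by auto
  have pbV: "pb x \<in> V" using pb_props xV by auto
  have c1: "cn x u = a" using cnK[OF uV xV assms(2,3)] .
  have c2: "cn (pb x) u = a" using cnK[OF uV pbV] assms pb_pb[OF xV] by auto
  define D where "D = N x - {pr x}"
  have finD: "finite D" unfolding D_def using finN by auto
  have h1: "N x = insert (pr x) D" unfolding D_def using pr_props[OF assms(1)] by (auto simp: nbhd_def)
  have h2: "N (pb x) = insert (pr (pb x)) D"
  proof
    show "N (pb x) \<subseteq> insert (pr (pb x)) D"
    proof
      fix w assume w: "w \<in> N (pb x)"
      show "w \<in> insert (pr (pb x)) D"
      proof (cases "w = pr (pb x)")
        case False
        have "w \<noteq> pr x" using w pr_props[OF assms(1)] Esym unfolding nbhd_def by auto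
        then have "E w x" using R1[OF assms(1)] False w Esym unfolding nbhd_def by auto
        then show ?thesis unfolding D_def nbhd_def using \<open>w \<noteq> pr x\<close> EV Esym by auto
      qed simp
    qed
    show "insert (pr (pb x)) D \<subseteq> N (pb x)"
    proof
      fix w assume w: "w \<in> insert (pr (pb x)) D"
      show "w \<in> N (pb x)"
      proof (cases "w = pr (pb x)")
        case True then show ?thesis using pr_pb_notE[OF assms(1)] EV unfolding nbhd_def by auto
      next
        case False
        then have wD: "w \<in> D" using w by auto
        then have "E w x" "w \<noteq> pr x" unfolding D_def nbhd_def using Esym by auto
        then have "E w (pb x)" using R1[OF assms(1)] False by auto
        then show ?thesis using EV Esym unfolding nbhd_def by auto
      qed
    qed
  qed
  have n1: "pr x \<notin> D" unfolding D_def by auto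
  have n2: "pr (pb x) \<notin> D" unfolding D_def nbhd_def using pr_pb_notE[OF assms(1)] Esym by auto
  have e1: "card (N x \<inter> N u) = a" using c1 unfolding common_nbrs_def .
  have e2: "card (N (pb x) \<inter> N u) = a" using c2 unfolding common_nbrs_def .
  have m1: "pr x \<in> N u \<longleftrightarrow> E u (pr x)" unfolding nbhd_def using EV by auto
  have m2: "pr (pb x) \<in> N u \<longleftrightarrow> E u (pr (pb x))" unfolding nbhd_def using EV by auto
  show ?thesis using e1 e2 card_ins_Int[OF finD n1, of "N u"] card_ins_Int[OF finD n2, of "N u"] h1 h2 m1 m2
    by (auto split: if_splits)
qed

lemma F3: assumes "NA x" shows "pb (pr x) = pr (pb x)" "NA (pr x)"
proof -
  have xV: "x \<in> V" using assms NA_V by auto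
  let ?x' = "pr x" and ?z = "pr (pb x)"
  have x'V: "?x' \<in> V" and zV: "?z \<in> V" using pr_props[OF assms] pr_props[OF NA_pb[OF assms]] by auto
  have zx: "?z \<noteq> x" using pr_pb_notE[OF assms] assms NA_ne Esym by metis
  have x'z: "?x' \<noteq> ?z" using pr_pb_notE[OF assms] pr_props[OF assms] Esym by metis
  have I: "N ?x' \<inter> N ?z = N ?x' - {x}"
  proof
    show "N ?x' \<inter> N ?z \<subseteq> N ?x' - {x}" using pr_pb_notE[OF assms] unfolding nbhd_def by auto
    show "N ?x' - {x} \<subseteq> N ?x' \<inter> N ?z"
    proof
      fix w assume w: "w \<in> N ?x' - {x}"
      then have "E w ?x'" "w \<noteq> x" unfolding nbhd_def using Esym by auto
      moreover have "w \<noteq> pb x" using pr_props(3)[OF assms] \<open>E w ?x'\<close> Esym by metis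
      ultimately have "E w ?z" using R2[OF assms] by auto
      then show "w \<in> N ?x' \<inter> N ?z" using w EV Esym unfolding nbhd_def by auto
    qed
  qed
  have xin: "x \<in> N ?x'" using pr_props[OF assms] xV Esym unfolding nbhd_def by auto
  have "cn ?x' ?z = k - 1" unfolding common_nbrs_def I using xin cardN[OF x'V] finN by simp
  then show eq: "pb ?x' = ?z" using pb_unique[OF x'V zV] x'z by auto
  have "\<not> E ?x' ?z"
  proof
    assume "E ?x' ?z"
    then have "?z \<in> N ?x' - {x}" using zx zV unfolding nbhd_def by auto
    then have "?z \<in> N ?z" using I by auto
    then show False using Eirr unfolding nbhd_def by auto
  qed
  then show "NA ?x'" unfolding NA_vertex_def using eq x'V by simp
qed

lemma F4: assumes "NA x" shows "pr (pr x) = x"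
proof -
  have xV: "x \<in> V" using assms NA_V by auto
  show ?thesis
    using pr_unique[OF F3(2)[OF assms] xV] pr_props[OF assms] F3(1)[OF assms] pr_pb_notE[OF assms] Esym by metis
qed

lemma A_twin: assumes "w \<in> V" "E w (pb w)" "u \<noteq> pb w" "E w u" shows "E (pb w) u"
proof -
  have pbV: "pb w \<in> V" using pb_props assms by auto
  have sub: "N w \<inter> N (pb w) \<subseteq> N w - {pb w}" unfolding nbhd_def using Eirr by auto
  have c: "card (N w \<inter> N (pb w)) = card (N w - {pb w})"
    using pb_props[OF assms(1)] cardN[OF assms(1)] assms(2) pbV finN unfolding common_nbrs_def nbhd_def
    by simp
  have "N w \<inter> N (pb w) = N w - {pb w}" using card_subset_eq[OF _ sub c] finN by auto
  then show ?thesis using assms EV unfolding nbhd_def by auto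
qed

lemma uniform: assumes "w \<in> V" "E u w" "u \<noteq> pb w" "\<not> (NA w \<and> (u = pr w \<or> u = pr (pb w)))"
  shows "E u (pb w)"
proof (cases "E w (pb w)")
  case True
  then show ?thesis using A_twin[OF assms(1) True assms(3)] assms(2) Esym by metis
next
  case False
  then have na: "NA w" unfolding NA_vertex_def using assms by auto
  then show ?thesis using R1[OF na] assms by auto
qed

lemma Cset_mem: assumes "NA x" "z \<in> Cset V E (k - 1) x"
  shows "NA z \<and> Cset V E (k - 1) z = Cset V E (k - 1) x"
proof -
  have xV: "x \<in> V" using assms NA_V by auto
  have nb: "NA (pb x)" using NA_pb[OF assms(1)] .
  have pbV: "pb x \<in> V" using NA_V nb by auto
  have z: "z = x \<or> z = pr x \<or> z = pb x \<or> z = pr (pb x)"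
    using assms(2) F3(1)[OF assms(1)] unfolding Cset_def by auto
  note f = F3[OF assms(1)] F3[OF nb] F4[OF assms(1)] F4[OF nb] pb_pb[OF xV]
  show ?thesis using z
  proof (elim disjE)
    assume "z = pb x" then show ?thesis using nb f unfolding Cset_def by auto
  next
    assume "z = pr x" then show ?thesis using f unfolding Cset_def by auto
  next
    assume "z = pr (pb x)" then show ?thesis using f unfolding Cset_def by auto
  qed (use assms in simp)
qed

lemma even_M: assumes "NA x" "NA y"
  shows "even (card (N x \<inter> N y - {pr x, pb (pr x), pr y, pb (pr y)}))"
proof (rule even_inv[where f = pb])
  show "finite (N x \<inter> N y - {pr x, pb (pr x), pr y, pb (pr y)})" using finN by auto
  have key: "E u (pb w)" if na: "NA u" and w: "w \<in> V" "E u w" "w \<noteq> pr u" "w \<noteq> pb (pr u)" for u w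
  proof (rule uniform[OF w(1,2)])
    have uV: "u \<in> V" using na NA_V by auto
    show "u \<noteq> pb w"
    proof
      assume "u = pb w"
      then have "w = pb u" using pb_pb w by metis
      then show False using w na NA_ne by auto
    qed
    show "\<not> (NA w \<and> (u = pr w \<or> u = pr (pb w)))"
    proof
      assume h: "NA w \<and> (u = pr w \<or> u = pr (pb w))"
      then have nw: "NA w" by auto
      show False using h
      proof (elim conjE disjE)
        assume "u = pr w" then show False using F4[OF nw] w by auto
      next
        assume "u = pr (pb w)"
        then have "pb u = pr w" using F3(1)[OF NA_pb[OF nw]] pb_pb[OF w(1)] by auto
        then have "pr (pb u) = w" using F4[OF nw] by auto
        then show False using F3(1)[OF na] w by auto
      qed
    qed
  qed
  show "\<forall>w\<in>N x \<inter> N y - {pr x, pb (pr x), pr y, pb (pr y)}.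
      pb w \<in> N x \<inter> N y - {pr x, pb (pr x), pr y, pb (pr y)} \<and> pb w \<noteq> w \<and> pb (pb w) = w"
  proof
    fix w assume w: "w \<in> N x \<inter> N y - {pr x, pb (pr x), pr y, pb (pr y)}"
    then have wV: "w \<in> V" and ex: "E x w" and ey: "E y w" unfolding nbhd_def by auto
    have x'V: "pr x \<in> V" "pr y \<in> V" using pr_props assms by auto
    have "E x (pb w)" using key[OF assms(1) wV ex] w by auto
    moreover have "E y (pb w)" using key[OF assms(2) wV ey] w by auto
    moreover have "pb w \<notin> {pr x, pb (pr x), pr y, pb (pr y)}"
      using w pb_pb[OF wV] pb_pb[OF x'V(1)] pb_pb[OF x'V(2)] by auto
    ultimately show "pb w \<in> N x \<inter> N y - {pr x, pb (pr x), pr y, pb (pr y)} \<and> pb w \<noteq> w \<and> pb (pb w) = w"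
      using pb_props[OF wV] pb_pb[OF wV] EV unfolding nbhd_def by auto
  qed
qed

lemma a_even: assumes "NA x" shows "even a"
proof -
  have xV: "x \<in> V" using assms NA_V by auto
  note p = pr_props[OF assms]
  have "N x \<inter> N (pr x) - {pr x, pb (pr x), pr (pr x), pb (pr (pr x))} = N x \<inter> N (pr x)"
    using F4[OF assms] F3(1)[OF assms] pr_pb_notE[OF assms] NA_ne[OF assms] Eirr unfolding nbhd_def by auto
  then have "even (card (N x \<inter> N (pr x)))" using even_M[OF assms F3(2)[OF assms]] by simp
  moreover have "pr x \<noteq> x" using p Eirr by metis
  moreover have "pr x \<noteq> pb x" using p NA_ne[OF assms] by metis
  ultimately show ?thesis using cnK[OF p(1) xV] unfolding common_nbrs_def by auto
qed

lemma parity: assumes "NA x" "NA y" "Cset V E (k - 1) x \<inter> Cset V E (k - 1) y = {}"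
  shows "E y (pr x) \<longleftrightarrow> E x (pr y)"
proof -
  have xV: "x \<in> V" and yV: "y \<in> V" using assms NA_V by auto
  have d: "y \<noteq> x" "y \<noteq> pb x" "pr x \<noteq> pr y" using assms(3) unfolding Cset_def by auto
  define M where "M = N x \<inter> N y - {pr x, pb (pr x), pr y, pb (pr y)}"
  define T where "T = N x \<inter> N y \<inter> {pr x, pb (pr x), pr y, pb (pr y)}"
  have u: "N x \<inter> N y = M \<union> T" "M \<inter> T = {}" unfolding M_def T_def by auto
  have fin: "finite M" "finite T" unfolding M_def T_def using finN by auto
  have "card (N x \<inter> N y) = a" using cnK[OF yV xV d(1,2)] unfolding common_nbrs_def .
  then have ca: "card M + card T = a" using u fin card_Un_disjoint by metis
  have em: "even (card M)" using even_M[OF assms(1,2)] unfolding M_def .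
  have ea: "even a" using a_even[OF assms(1)] .
  have nx: "\<not> E x (pb (pr x))" using pr_pb_notE[OF assms(1)] F3(1)[OF assms(1)] by auto
  have ny: "\<not> E y (pb (pr y))" using pr_pb_notE[OF assms(2)] F3(1)[OF assms(2)] by auto
  have T: "T = (if E y (pr x) then {pr x} else {}) \<union> (if E x (pr y) then {pr y} else {})"
    unfolding T_def nbhd_def using nx ny pr_props[OF assms(1)] pr_props[OF assms(2)] EV Esym by auto
  show ?thesis
  proof (cases "E y (pr x)"; cases "E x (pr y)")
  qed (use ca em ea T d(3) in auto)
qed

end

theorem lemma17:
  fixes V :: "'a set" and E :: "'a \<Rightarrow> 'a \<Rightarrow> bool" and n k a :: nat and x y :: 'a
  assumes deza: "deza_graph V E n k (k - 1) a"
    and k: "k > 1"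
    and beta: "\<forall>v\<in>V. deza_beta V E (k - 1) v = 1"
    and x: "NA_vertex V E (k - 1) x" and y: "NA_vertex V E (k - 1) y"
    and Cne: "Cset V E (k - 1) x \<noteq> Cset V E (k - 1) y"
  defines "xb \<equiv> vb V E (k - 1) x" and "yb \<equiv> vb V E (k - 1) y"
    and "x' \<equiv> vprime V E (k - 1) x" and "y' \<equiv> vprime V E (k - 1) y"
    and "xb' \<equiv> vb V E (k - 1) (vprime V E (k - 1) x)"
    and "yb' \<equiv> vb V E (k - 1) (vprime V E (k - 1) y)"
  shows "(some_edge E {x, xb} {y, yb} \<or> some_edge E {x', xb'} {y', yb'} \<longrightarrow>
            all_edges E {x, xb} {y, yb} \<and> all_edges E {x', xb'} {y', yb'})
       \<and> (some_edge E {x, xb} {y', yb'} \<or> some_edge E {x', xb'} {y, yb} \<longrightarrow>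
            all_edges E {x, xb} {y', yb'} \<and> all_edges E {x', xb'} {y, yb})
       \<and> num_edges_between E (Cset V E (k - 1) x) (Cset V E (k - 1) y) \<in> {0, 8, 16}"
proof -
  interpret dz V E n k a using deza k beta by unfold_locales
  have xV: "x \<in> V" and yV: "y \<in> V" using x y NA_V by auto
  have Cx: "Cset V E (k - 1) x = {x, x', xb, xb'}" unfolding Cset_def x'_def xb_def xb'_def by auto
  have Cy: "Cset V E (k - 1) y = {y, y', yb, yb'}" unfolding Cset_def y'_def yb_def yb'_def by auto
  have disj: "Cset V E (k - 1) x \<inter> Cset V E (k - 1) y = {}"
  proof (rule ccontr)
    assume "Cset V E (k - 1) x \<inter> Cset V E (k - 1) y \<noteq> {}"
    then obtain z where "z \<in> Cset V E (k - 1) x" "z \<in> Cset V E (k - 1) y" by auto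
    then show False using Cset_mem[OF x] Cset_mem[OF y] Cne by metis
  qed
  have xb'2: "xb' = pr (pb x)" unfolding xb'_def using F3(1)[OF x] by simp
  have yb'2: "yb' = pr (pb y)" unfolding yb'_def using F3(1)[OF y] by simp
  have D: "{x, x', xb, xb'} \<inter> {y, y', yb, yb'} = {}" using disj Cx Cy by simp
  have dx1: "x \<noteq> xb" "x \<noteq> x'" "x' \<noteq> xb" "xb' \<noteq> xb"
    using pb_props[OF xV] pr_props[OF x] Eirr NA_ne[OF x] pr_pb_notE[OF x]
    unfolding xb_def x'_def xb'2 by metis+
  have dx2: "xb' \<noteq> x" using pr_pb_notE[OF x] NA_ne[OF x] Esym unfolding xb'2 xb_def by metis
  have dx3: "xb' \<noteq> x'" using pr_pb_notE[OF x] pr_props[OF x] unfolding xb'2 x'_def by metis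
  note dx = dx1 dx2 dx3
  have dy1: "y \<noteq> yb" "y \<noteq> y'" "y' \<noteq> yb" "yb' \<noteq> yb"
    using pb_props[OF yV] pr_props[OF y] Eirr NA_ne[OF y] pr_pb_notE[OF y]
    unfolding yb_def y'_def yb'2 by metis+
  have dy2: "yb' \<noteq> y" using pr_pb_notE[OF y] NA_ne[OF y] Esym unfolding yb'2 yb_def by metis
  have dy3: "yb' \<noteq> y'" using pr_pb_notE[OF y] pr_props[OF y] unfolding yb'2 y'_def by metis
  note dy = dy1 dy2 dy3
  have ny': "NA y'" unfolding y'_def using F3(2)[OF y] .
  have Cy': "Cset V E (k - 1) y' = Cset V E (k - 1) y"
    using Cset_mem[OF y, of y'] unfolding Cset_def y'_def by auto
  have r1x: "\<And>u. u \<notin> {x', xb'} \<Longrightarrow> E u x \<longleftrightarrow> E u xb" using R1[OF x] unfolding x'_def xb'2 xb_def by auto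
  have r1y: "\<And>u. u \<notin> {y', yb'} \<Longrightarrow> E u y \<longleftrightarrow> E u yb" using R1[OF y] unfolding y'_def yb'2 yb_def by auto
  have r2x: "\<And>u. u \<notin> {x, xb} \<Longrightarrow> E u x' \<longleftrightarrow> E u xb'" using R2[OF x] unfolding x'_def xb'2 xb_def by auto
  have r2y: "\<And>u. u \<notin> {y, yb} \<Longrightarrow> E u y' \<longleftrightarrow> E u yb'" using R2[OF y] unfolding y'_def yb'2 yb_def by auto
  have par1: "E y x' \<longleftrightarrow> E x y'" using parity[OF x y disj] unfolding x'_def y'_def .
  have par2: "E y' x' \<longleftrightarrow> E x y" using parity[OF x ny'] disj Cy' F4[OF y] unfolding x'_def y'_def by auto
  define p where "p = E x y"
  define q where "q = E x y'"
  have Dn: "x \<noteq> y" "x \<noteq> y'" "x \<noteq> yb" "x \<noteq> yb'"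
    "x' \<noteq> y" "x' \<noteq> y'" "x' \<noteq> yb" "x' \<noteq> yb'"
    "xb \<noteq> y" "xb \<noteq> y'" "xb \<noteq> yb" "xb \<noteq> yb'"
    "xb' \<noteq> y" "xb' \<noteq> y'" "xb' \<noteq> yb" "xb' \<noteq> yb'" using D by auto
  have e1: "E x y = p" "E x y' = q" unfolding p_def q_def by simp_all
  have e2: "E x yb = p" using r1y[of x] Dn e1 by auto
  have e3: "E xb y = p" using r1x[of y] Dn e1 Esym[of y x] Esym[of y xb] by auto
  have e4: "E xb yb = p" using r1y[of xb] Dn e3 by auto
  have e5: "E x' y' = p" using par2 e1 Esym[of y' x'] by auto
  have e6: "E x' yb' = p" using r2y[of x'] Dn e5 by auto
  have e7: "E xb' y' = p" using r2x[of y'] Dn e5 Esym[of y' x'] Esym[of y' xb'] by auto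
  have e8: "E xb' yb' = p" using r2y[of xb'] Dn e7 by auto
  have f2: "E x yb' = q" using r2y[of x] Dn e1 by auto
  have f3: "E xb y' = q" using r1x[of y'] Dn e1 Esym[of y' x] Esym[of y' xb] by auto
  have f4: "E xb yb' = q" using r2y[of xb] Dn f3 by auto
  have f5: "E x' y = q" using par1 e1 Esym[of y x'] by auto
  have f6: "E x' yb = q" using r1y[of x'] Dn f5 by auto
  have f7: "E xb' y = q" using r2x[of y] Dn f5 Esym[of y x'] Esym[of y xb'] by auto
  have f8: "E xb' yb = q" using r1y[of xb'] Dn f7 by auto
  note e = e1 e2 e3 e4 e5 e6 e7 e8 f2 f3 f4 f5 f6 f7 f8
  have part1: "some_edge E {x, xb} {y, yb} \<or> some_edge E {x', xb'} {y', yb'} \<longrightarrow>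
            all_edges E {x, xb} {y, yb} \<and> all_edges E {x', xb'} {y', yb'}"
    unfolding some_edge_def all_edges_def using e by auto
  have part2: "some_edge E {x, xb} {y', yb'} \<or> some_edge E {x', xb'} {y, yb} \<longrightarrow>
            all_edges E {x, xb} {y', yb'} \<and> all_edges E {x', xb'} {y, yb}"
    unfolding some_edge_def all_edges_def using e by auto
  define R where "R = {(u, w). u \<in> {x, x', xb, xb'} \<and> w \<in> {y, y', yb, yb'} \<and> E u w}"
  have P: "card {x, xb} = 2" "card {x', xb'} = 2" "card {y, yb} = 2" "card {y', yb'} = 2"
  proof -
    have "y \<noteq> yb" using pb_props(2)[OF yV] unfolding yb_def by auto
    moreover have "y' \<noteq> yb'" using pr_pb_notE(2)[OF y] pr_props(2)[OF y] unfolding yb'2 y'_def by metis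
    ultimately show "card {x, xb} = 2" "card {x', xb'} = 2" "card {y, yb} = 2" "card {y', yb'} = 2"
      using dx by auto
  qed
  have cR: "card R \<in> {0, 8, 16}"
  proof (cases p; cases q)
    assume "p" "q"
    then have "R = {x, xb} \<times> {y, yb} \<union> {x', xb'} \<times> {y', yb'} \<union> ({x, xb} \<times> {y', yb'} \<union> {x', xb'} \<times> {y, yb})"
      unfolding R_def using e by auto
    moreover have "card ({x, xb} \<times> {y, yb} \<union> {x', xb'} \<times> {y', yb'} \<union> ({x, xb} \<times> {y', yb'} \<union> {x', xb'} \<times> {y, yb})) = 16"
      using P D dx dy by (intro card16) auto
    ultimately show ?thesis by simp
  next
    assume "p" "\<not> q"
    then have "R = {x, xb} \<times> {y, yb} \<union> {x', xb'} \<times> {y', yb'}"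
      unfolding R_def using e by auto
    moreover have "card ({x, xb} \<times> {y, yb} \<union> {x', xb'} \<times> {y', yb'}) = 8"
      using P D dx dy by (intro card8) auto
    ultimately show ?thesis by simp
  next
    assume "\<not> p" "q"
    then have "R = {x, xb} \<times> {y', yb'} \<union> {x', xb'} \<times> {y, yb}"
      unfolding R_def using e by auto
    moreover have "card ({x, xb} \<times> {y', yb'} \<union> {x', xb'} \<times> {y, yb}) = 8"
      using P D dx dy by (intro card8) auto
    ultimately show ?thesis by simp
  next
    assume "\<not> p" "\<not> q"
    then have "R = {}" unfolding R_def using e by auto
    then show ?thesis by simp
  qed
  have "num_edges_between E (Cset V E (k - 1) x) (Cset V E (k - 1) y) = card R"
    unfolding Cx Cy R_def using num_edges_card[OF D] .
  then show ?thesis using part1 part2 cR by simp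
qed

end
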